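(* Let $S=(P,L)$ be a slim dense near hexagon, let $Q_1,Q_2$ be two disjoint big quads of $S$, and let $Y$ be the subspace of $S$ generated by $Q_1\cup Q_2$. For $\{i,j\}=\{1,2\}$ and $x\in P\setminus Y$, let $x^{j}$ denote the unique point of $Q_j$ at distance $1$ from $x$, and for $y\in Q_i$ let $z_y$ denote the unique point of $Q_j$ at distance $1$ from $y$. Let $\ell$ be a line of $S$ disjoint from $Y$ and let $x,y\in\ell$ with $x\neq y$. Then the line $x^{1}y^{1}$ equals the line $x^{1}z_{x^{2}}$ if and only if the line $x^{2}y^{2}$ equals the line $x^{2}z_{x^{1}}$. Moreover, if $x^{1}y^{1}=x^{1}z_{x^{2}}$, then $(y^{1},y^{2})=(z_{x^{2}},\,x^{2}\ast z_{x^{1}})$ or $(y^1,y^2)=(x^{1}\ast z_{x^{2}},\,z_{x^{1}})$.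
   Context: A slim partial linear space has exactly $3$ points per line; for distinct collinear points $u,v$, $uv$ denotes the line through them and $u\ast v$ the third point of that line. $d$ is the distance in the collinearity graph. A near hexagon is a connected partial linear space of diameter $3$ with no point collinear with all others such that every point has a unique nearest point on every line. A quad is a convex subset of diameter $2$ in which no point is collinear with all others; the near hexagon is dense if any two points at distance $2$ lie in a quad. A quad $Q$ is big if every point of $S$ has distance at most $1$ from $Q$. A subspace is a set of points containing every line meeting it in at least two points; the subspace generated by a set is the intersection of all subspaces containing it. *)

theory Defs
  imports Main
begin

definition partial_linear_space :: "'a set \<Rightarrow> 'a set set \<Rightarrow> bool" where
  "partial_linear_space P L \<longleftrightarrow>
     (\<forall>l\<in>L. l \<subseteq> P \<and> finite l \<and> card l \<ge> 2) \<and>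
     (\<forall>l\<in>L. \<forall>m\<in>L. \<forall>u v. u \<noteq> v \<and> u \<in> l \<and> v \<in> l \<and> u \<in> m \<and> v \<in> m \<longrightarrow> l = m)"

definition slim_pls :: "'a set \<Rightarrow> 'a set set \<Rightarrow> bool" where
  "slim_pls P L \<longleftrightarrow> partial_linear_space P L \<and> (\<forall>l\<in>L. card l = 3)"

definition adj :: "'a set set \<Rightarrow> 'a \<Rightarrow> 'a \<Rightarrow> bool" where
  "adj L u v \<longleftrightarrow> u \<noteq> v \<and> (\<exists>l\<in>L. u \<in> l \<and> v \<in> l)"

definition dist :: "'a set set \<Rightarrow> 'a \<Rightarrow> 'a \<Rightarrow> nat" where
  "dist L u v = (LEAST n. (adj L ^^ n) u v)"

definition line_through :: "'a set set \<Rightarrow> 'a \<Rightarrow> 'a \<Rightarrow> 'a set" where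
  "line_through L u v = (THE l. l \<in> L \<and> u \<in> l \<and> v \<in> l)"

definition third :: "'a set set \<Rightarrow> 'a \<Rightarrow> 'a \<Rightarrow> 'a" where
  "third L u v = (THE w. w \<in> line_through L u v \<and> w \<noteq> u \<and> w \<noteq> v)"

definition near_hexagon :: "'a set \<Rightarrow> 'a set set \<Rightarrow> bool" where
  "near_hexagon P L \<longleftrightarrow>
     partial_linear_space P L \<and>
     (\<forall>x\<in>P. \<forall>y\<in>P. \<exists>n. (adj L ^^ n) x y) \<and>
     (\<forall>x\<in>P. \<forall>y\<in>P. dist L x y \<le> 3) \<and> (\<exists>x\<in>P. \<exists>y\<in>P. dist L x y = 3) \<and>
     \<not> (\<exists>x\<in>P. \<forall>y\<in>P. y \<noteq> x \<longrightarrow> adj L x y) \<and>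
     (\<forall>x\<in>P. \<forall>l\<in>L. \<exists>!y. y \<in> l \<and> (\<forall>z\<in>l. z \<noteq> y \<longrightarrow> dist L x y < dist L x z))"

definition convex :: "'a set \<Rightarrow> 'a set set \<Rightarrow> 'a set \<Rightarrow> bool" where
  "convex P L X \<longleftrightarrow> X \<subseteq> P \<and>
     (\<forall>x\<in>X. \<forall>y\<in>X. \<forall>z\<in>P. dist L x z + dist L z y = dist L x y \<longrightarrow> z \<in> X)"

definition quad :: "'a set \<Rightarrow> 'a set set \<Rightarrow> 'a set \<Rightarrow> bool" where
  "quad P L Q \<longleftrightarrow> convex P L Q \<and>
     (\<forall>x\<in>Q. \<forall>y\<in>Q. dist L x y \<le> 2) \<and> (\<exists>x\<in>Q. \<exists>y\<in>Q. dist L x y = 2) \<and>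
     \<not> (\<exists>x\<in>Q. \<forall>y\<in>Q. y \<noteq> x \<longrightarrow> adj L x y)"

definition dense :: "'a set \<Rightarrow> 'a set set \<Rightarrow> bool" where
  "dense P L \<longleftrightarrow> (\<forall>x\<in>P. \<forall>y\<in>P. dist L x y = 2 \<longrightarrow> (\<exists>Q. quad P L Q \<and> x \<in> Q \<and> y \<in> Q))"

definition big_quad :: "'a set \<Rightarrow> 'a set set \<Rightarrow> 'a set \<Rightarrow> bool" where
  "big_quad P L Q \<longleftrightarrow> quad P L Q \<and> (\<forall>x\<in>P. \<exists>y\<in>Q. dist L x y \<le> 1)"

definition subspace :: "'a set \<Rightarrow> 'a set set \<Rightarrow> 'a set \<Rightarrow> bool" where
  "subspace P L X \<longleftrightarrow> X \<subseteq> P \<and> (\<forall>l\<in>L. (\<exists>u v. u \<noteq> v \<and> u \<in> l \<inter> X \<and> v \<in> l \<inter> X) \<longrightarrow> l \<subseteq> X)"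

definition generated_subspace :: "'a set \<Rightarrow> 'a set set \<Rightarrow> 'a set \<Rightarrow> 'a set" where
  "generated_subspace P L A = \<Inter>{X. subspace P L X \<and> A \<subseteq> X}"

definition proj_pt :: "'a set set \<Rightarrow> 'a set \<Rightarrow> 'a \<Rightarrow> 'a" where
  "proj_pt L Q x = (THE p. p \<in> Q \<and> dist L x p = 1)"

end

theory Submission imports Defs begin

locale nh =
  fixes P :: "'a set" and L :: "'a set set"
  assumes slim: "slim_pls P L" and nhx: "near_hexagon P L"
begin

abbreviation d where "d \<equiv> dist L"

lemma pls: "partial_linear_space P L" using slim by (simp add: slim_pls_def)
lemma line_sub: "m \<in> L \<Longrightarrow> m \<subseteq> P" using pls by (auto simp: partial_linear_space_def)
lemma line_card: "m \<in> L \<Longrightarrow> card m = 3" using slim by (auto simp: slim_pls_def)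
lemma line_uniq: "m \<in> L \<Longrightarrow> n \<in> L \<Longrightarrow> u \<noteq> v \<Longrightarrow> u \<in> m \<Longrightarrow> v \<in> m \<Longrightarrow> u \<in> n \<Longrightarrow> v \<in> n \<Longrightarrow> m = n"
  using pls unfolding partial_linear_space_def by blast

lemma card3: assumes "m \<in> L" "u \<in> m" "v \<in> m" "s \<in> m" "u \<noteq> v" "u \<noteq> s" "v \<noteq> s" "z \<in> m"
  shows "z = u \<or> z = v \<or> z = s"
proof -
  obtain a b c where "m = {a,b,c}" using line_card[OF assms(1)] by (auto simp: card_3_iff)
  thus ?thesis using assms by auto
qed

lemma third_ex: assumes "m \<in> L" "u \<in> m" "v \<in> m" "u \<noteq> v" shows "\<exists>s\<in>m. s \<noteq> u \<and> s \<noteq> v"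
proof -
  obtain a b c where "m = {a,b,c}" "a \<noteq> b" "b \<noteq> c" "a \<noteq> c" using line_card[OF assms(1)] by (auto simp: card_3_iff)
  thus ?thesis using assms by auto
qed

lemma adj_sym: "adj L u v \<Longrightarrow> adj L v u" by (auto simp: adj_def)
lemma adj_P: "adj L u v \<Longrightarrow> u \<in> P \<and> v \<in> P" using line_sub by (auto simp: adj_def)
lemma adj_neq: "adj L u v \<Longrightarrow> u \<noteq> v" by (auto simp: adj_def)
lemma line_adj: "m \<in> L \<Longrightarrow> u \<in> m \<Longrightarrow> v \<in> m \<Longrightarrow> u \<noteq> v \<Longrightarrow> adj L u v" by (auto simp: adj_def)
lemma adj_line: "adj L u v \<Longrightarrow> \<exists>m\<in>L. u \<in> m \<and> v \<in> m" by (auto simp: adj_def)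

lemma relpow_sym: "(adj L ^^ n) u v \<Longrightarrow> (adj L ^^ n) v u"
proof (induction n arbitrary: u v)
  case 0 thus ?case by auto
next
  case (Suc n)
  then obtain z where "(adj L ^^ n) u z" "adj L z v" by (auto elim: relpowp_Suc_E)
  thus ?case using Suc.IH adj_sym relpowp_Suc_I2 by metis
qed

lemma conn: "x \<in> P \<Longrightarrow> y \<in> P \<Longrightarrow> \<exists>n. (adj L ^^ n) x y" using nhx by (auto simp: near_hexagon_def)

lemma dist_path: "x \<in> P \<Longrightarrow> y \<in> P \<Longrightarrow> (adj L ^^ d x y) x y"
  unfolding dist_def using conn by (rule LeastI_ex)
lemma dist_le: "(adj L ^^ n) x y \<Longrightarrow> d x y \<le> n"
  unfolding dist_def by (rule Least_le)
lemma dist_0: "d x x = 0" using dist_le[of 0 x x] by auto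
lemma dist_eq0: "x \<in> P \<Longrightarrow> y \<in> P \<Longrightarrow> d x y = 0 \<Longrightarrow> x = y"
  using dist_path[of x y] by auto
lemma dist_1: "adj L x y \<Longrightarrow> d x y = 1"
proof -
  assume a: "adj L x y"
  have "d x y \<le> 1" using dist_le[of 1 x y] a by auto
  moreover have "d x y \<noteq> 0" using dist_eq0 a adj_P adj_neq by blast
  ultimately show ?thesis by simp
qed
lemma dist_1D: "x \<in> P \<Longrightarrow> y \<in> P \<Longrightarrow> d x y = 1 \<Longrightarrow> adj L x y"
  using dist_path[of x y] by auto
lemma dist_sym: assumes "x \<in> P" "y \<in> P" shows "d x y = d y x"
proof -
  have "d y x \<le> d x y" by (rule dist_le, rule relpow_sym, rule dist_path[OF assms])
  moreover have "d x y \<le> d y x" by (rule dist_le, rule relpow_sym, rule dist_path[OF assms(2,1)])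
  ultimately show ?thesis by simp
qed
lemma dist_tri: assumes "x \<in> P" "y \<in> P" "z \<in> P" shows "d x z \<le> d x y + d y z"
  by (rule dist_le, rule relpowp_trans, rule dist_path[OF assms(1,2)], rule dist_path[OF assms(2,3)])

lemma dist2: assumes "u \<noteq> v" "\<not> adj L u v" "adj L u z" "adj L z v" shows "d u v = 2"
proof -
  have P: "u \<in> P" "v \<in> P" "z \<in> P" using assms adj_P by auto
  have "d u v \<le> 2" using dist_tri[OF P(1) P(3) P(2)] dist_1 assms by auto
  moreover have "d u v \<noteq> 0" using dist_eq0 P assms by blast
  moreover have "d u v \<noteq> 1" using dist_1D P assms by blast
  ultimately show ?thesis by simp
qed

lemma np: assumes "x \<in> P" "m \<in> L" shows "\<exists>y. y \<in> m \<and> (\<forall>z\<in>m. z \<noteq> y \<longrightarrow> d x y < d x z)"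
proof -
  have "\<forall>x\<in>P. \<forall>l\<in>L. \<exists>!y. y \<in> l \<and> (\<forall>z\<in>l. z \<noteq> y \<longrightarrow> d x y < d x z)"
    using nhx unfolding near_hexagon_def by (elim conjE)
  hence "\<exists>!y. y \<in> m \<and> (\<forall>z\<in>m. z \<noteq> y \<longrightarrow> d x y < d x z)" using assms by simp
  thus ?thesis by (rule ex1_implies_ex)
qed

lemma LP1: assumes "x \<in> P" "m \<in> L" "u \<in> m" "v \<in> m" "u \<noteq> v" "adj L x u" "adj L x v" shows "x \<in> m"
proof -
  obtain y where y: "y \<in> m" "\<forall>z\<in>m. z \<noteq> y \<longrightarrow> d x y < d x z" using np[OF assms(1,2)] by blast
  have du: "d x u = 1" "d x v = 1" using dist_1 assms by auto
  have "y \<noteq> u"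
  proof
    assume "y = u" then have "d x u < d x v" using y(2) assms(4,5) by auto
    thus False using du by simp
  qed
  moreover have "y \<noteq> v"
  proof
    assume "y = v" then have "d x v < d x u" using y(2) assms(3,5) by auto
    thus False using du by simp
  qed
  ultimately have "d x y < 1" using y(2) du assms(3) by auto
  hence "x = y" using dist_eq0[of x y] assms(1,2) y(1) line_sub by blast
  thus ?thesis using y by simp
qed

lemma LP2: assumes "x \<in> P" "m \<in> L" "u \<in> m" "v \<in> m" "s \<in> m" "u \<noteq> v" "u \<noteq> s" "v \<noteq> s"
  "d x u = 2" "d x v = 2" shows "d x s \<le> 1"
proof -
  obtain y where y: "y \<in> m" "\<forall>z\<in>m. z \<noteq> y \<longrightarrow> d x y < d x z" using np[OF assms(1,2)] by blast
  have "y \<noteq> u"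
  proof
    assume "y = u" then have "d x u < d x v" using y(2) assms(4,6) by auto
    thus False using assms by simp
  qed
  moreover have "y \<noteq> v"
  proof
    assume "y = v" then have "d x v < d x u" using y(2) assms(3,6) by auto
    thus False using assms by simp
  qed
  ultimately have "y = s" using card3[OF assms(2,3,4,5,6,7,8) y(1)] by auto
  hence "d x s < d x u" using y(2) assms(3,7) by auto
  thus ?thesis using assms by simp
qed

lemma line_through_eq: assumes "m \<in> L" "u \<noteq> v" "u \<in> m" "v \<in> m" shows "line_through L u v = m"
  unfolding line_through_def
proof (rule the_equality)
  show "m \<in> L \<and> u \<in> m \<and> v \<in> m" using assms by simp
  fix l assume "l \<in> L \<and> u \<in> l \<and> v \<in> l"
  thus "l = m" using line_uniq[of l m u v] assms by simp
qed

lemma third_eq: assumes "m \<in> L" "u \<in> m" "v \<in> m" "g \<in> m" "u \<noteq> v" "u \<noteq> g" "v \<noteq> g"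
  shows "third L u v = g"
  unfolding third_def line_through_eq[OF assms(1,5,2,3)]
proof (rule the_equality)
  show "g \<in> m \<and> g \<noteq> u \<and> g \<noteq> v" using assms by simp
  fix w assume "w \<in> m \<and> w \<noteq> u \<and> w \<noteq> v"
  thus "w = g" using card3[OF assms(1,2,3,4,5,6,7), of w] by auto
qed


lemma quad_P: "quad P L Q \<Longrightarrow> Q \<subseteq> P" unfolding quad_def convex_def by (elim conjE)
lemma quad_diam: "quad P L Q \<Longrightarrow> u \<in> Q \<Longrightarrow> v \<in> Q \<Longrightarrow> d u v \<le> 2" unfolding quad_def by blast
lemma quad_conv: assumes "quad P L Q" "u \<in> Q" "v \<in> Q" "d u v = 2" "adj L u z" "adj L z v" shows "z \<in> Q"
proof -
  have cv: "\<forall>x\<in>Q. \<forall>y\<in>Q. \<forall>z\<in>P. d x z + d z y = d x y \<longrightarrow> z \<in> Q"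
    using assms(1) unfolding quad_def convex_def by (elim conjE)
  have "z \<in> P" using adj_P assms by blast
  moreover have "d u z + d z v = d u v" using dist_1 assms by simp
  ultimately show ?thesis using cv assms(2,3) by blast
qed
lemma quad_far: assumes "quad P L Q" "p \<in> Q" shows "\<exists>z\<in>Q. z \<noteq> p \<and> \<not> adj L p z"
  using assms unfolding quad_def by blast
lemma big_quad: "big_quad P L Q \<Longrightarrow> quad P L Q" by (simp add: big_quad_def)
lemma big_near: assumes "big_quad P L Q" "p \<in> P" shows "\<exists>q\<in>Q. d p q \<le> 1"
  using assms unfolding big_quad_def by blast
lemma big_ex: assumes "big_quad P L Q" "p \<in> P" "p \<notin> Q" shows "\<exists>q\<in>Q. adj L p q"
proof -
  obtain q where q: "q \<in> Q" "d p q \<le> 1" using big_near assms by blast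
  have qP: "q \<in> P" using q quad_P big_quad assms by blast
  have "d p q \<noteq> 0" using dist_eq0[OF assms(2) qP] q assms by blast
  hence "adj L p q" using dist_1D[OF assms(2) qP] q by simp
  thus ?thesis using q by blast
qed
lemma d2: assumes "u \<in> P" "v \<in> P" "u \<noteq> v" "\<not> adj L u v" "d u v \<le> 2" shows "d u v = 2"
proof -
  have "d u v \<noteq> 0" using dist_eq0 assms by blast
  moreover have "d u v \<noteq> 1" using dist_1D assms by blast
  ultimately show ?thesis using assms by simp
qed

lemma ge2: assumes "u \<in> P" "v \<in> P" "u \<noteq> v" "\<not> adj L u v" shows "d u v \<ge> 2"
proof -
  have "d u v \<noteq> 0" using dist_eq0[OF assms(1,2)] assms(3) by blast
  moreover have "d u v \<noteq> 1" using dist_1D[OF assms(1,2)] assms(4) by blast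
  ultimately show ?thesis by linarith
qed
lemma le1: assumes "u \<in> P" "v \<in> P" "u \<noteq> v" "d u v \<le> 1" shows "adj L u v"
proof -
  have "d u v \<noteq> 0" using dist_eq0[OF assms(1,2)] assms(3) by blast
  hence "d u v = 1" using assms(4) by linarith
  thus ?thesis using dist_1D[OF assms(1,2)] by blast
qed

lemma G: assumes bA: "big_quad P L A" and bB: "big_quad P L B" and dj: "A \<inter> B = {}"
  and p: "p \<in> B" and q: "q \<in> A" and q': "q' \<in> A" and pq: "adj L p q" and pq': "adj L p q'"
  shows "q = q'"
proof (rule ccontr)
  assume ne: "q \<noteq> q'"
  have qA: "quad P L A" and qB: "quad P L B" using bA bB big_quad by auto
  have PP: "p \<in> P" "q \<in> P" "q' \<in> P" using adj_P pq pq' by auto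
  have pnA: "p \<notin> A" using p dj by blast
  have adjqq: "adj L q q'"
  proof (rule ccontr)
    assume na: "\<not> adj L q q'"
    have "d q q' = 2" by (rule dist2[OF ne na adj_sym[OF pq] pq'])
    hence "p \<in> A" using quad_conv[OF qA q q' _ adj_sym[OF pq] pq'] by blast
    thus False using pnA by blast
  qed
  obtain m where m: "m \<in> L" "q \<in> m" "q' \<in> m" using adj_line[OF adjqq] by blast
  have pm: "p \<in> m" using LP1[OF PP(1) m(1) m(2) m(3) ne pq pq'] .
  have pne: "p \<noteq> q" "p \<noteq> q'" using p q q' dj by auto
  have clI: "d s q \<le> 1 \<or> d s q' \<le> 1" if s: "s \<in> A" for s
  proof (rule ccontr)
    assume "\<not> (d s q \<le> 1 \<or> d s q' \<le> 1)"
    moreover have "d s q \<le> 2" "d s q' \<le> 2" using quad_diam[OF qA] s q q' by auto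
    ultimately have e: "d s q = 2" "d s q' = 2" by auto
    have sP: "s \<in> P" using s quad_P[OF qA] by blast
    have "d s p \<le> 1" using LP2[OF sP m(1) m(2) m(3) pm ne pne(1)[symmetric] pne(2)[symmetric] e] .
    moreover have "s \<noteq> p" using s pnA by blast
    ultimately have sp: "adj L s p" by (rule le1[OF sP PP(1), rotated])
    have "d q s = 2" using e dist_sym[OF sP PP(2)] by simp
    hence "p \<in> A" by (rule quad_conv[OF qA q s _ adj_sym[OF pq] adj_sym[OF sp]])
    thus False using pnA by blast
  qed
  obtain z where z: "z \<in> B" "z \<noteq> p" "\<not> adj L p z" using quad_far[OF qB p] by blast
  have zP: "z \<in> P" using z quad_P[OF qB] by blast
  have dpz: "d p z = 2" by (rule d2[OF PP(1) zP z(2)[symmetric] z(3) quad_diam[OF qB p z(1)]])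
  have dzp: "d z p = 2" using dpz dist_sym[OF PP(1) zP] by simp
  have nzq: "\<not> adj L z q"
  proof
    assume zq: "adj L z q"
    have "q \<in> B" by (rule quad_conv[OF qB p z(1) dpz pq adj_sym[OF zq]])
    thus False using q dj by blast
  qed
  have nzq': "\<not> adj L z q'"
  proof
    assume zq: "adj L z q'"
    have "q' \<in> B" by (rule quad_conv[OF qB p z(1) dpz pq' adj_sym[OF zq]])
    thus False using q' dj by blast
  qed
  have zq: "z \<noteq> q" "z \<noteq> q'" using z q q' dj by auto
  have g1: "d z q \<ge> 2" by (rule ge2[OF zP PP(2) zq(1) nzq])
  have g2: "d z q' \<ge> 2" by (rule ge2[OF zP PP(3) zq(2) nzq'])
  obtain s where s: "s \<in> A" "d z s \<le> 1" using big_near[OF bA zP] by blast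
  have sP: "s \<in> P" using s quad_P[OF qA] by blast
  show False
  proof (cases "d s q \<le> 1")
    case True
    have "d z q \<le> d z s + d s q" by (rule dist_tri[OF zP sP PP(2)])
    hence e: "d z q = 2" using True s g1 by linarith
    have "d z q' \<le> 1" using LP2[OF zP m(1) m(2) pm m(3) pne(1)[symmetric] ne pne(2) e dzp] .
    thus False using g2 by simp
  next
    case False
    hence T: "d s q' \<le> 1" using clI[OF s(1)] by simp
    have "d z q' \<le> d z s + d s q'" by (rule dist_tri[OF zP sP PP(3)])
    hence e: "d z q' = 2" using T s g2 by linarith
    have "d z q \<le> 1" using LP2[OF zP m(1) m(3) pm m(2) pne(2)[symmetric] ne[symmetric] pne(1) e dzp] .
    thus False using g1 by simp
  qed
qed


definition Ycl :: "'a set \<Rightarrow> bool" where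
  "Ycl Y \<longleftrightarrow> (\<forall>m\<in>L. \<forall>u v. u \<noteq> v \<and> u \<in> m \<and> v \<in> m \<and> u \<in> Y \<and> v \<in> Y \<longrightarrow> m \<subseteq> Y)"

lemma YclD: "Ycl Y \<Longrightarrow> m \<in> L \<Longrightarrow> u \<noteq> v \<Longrightarrow> u \<in> m \<Longrightarrow> v \<in> m \<Longrightarrow> u \<in> Y \<Longrightarrow> v \<in> Y \<Longrightarrow> m \<subseteq> Y"
  unfolding Ycl_def by blast

lemma YclT: assumes Y: "Ycl Y" and a: "adj L u v" "u \<in> Y" "v \<in> Y" and x: "x \<in> P" "adj L x u" "adj L x v"
  shows "x \<in> Y"
proof -
  obtain m where m: "m \<in> L" "u \<in> m" "v \<in> m" using adj_line[OF a(1)] by blast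
  have "x \<in> m" by (rule LP1[OF x(1) m(1) m(2) m(3) adj_neq[OF a(1)] x(2) x(3)])
  moreover have "m \<subseteq> Y" by (rule YclD[OF Y m(1) adj_neq[OF a(1)] m(2) m(3) a(2) a(3)])
  ultimately show ?thesis by blast
qed

lemma UY: assumes qA: "quad P L A" and AY: "A \<subseteq> Y" and Y: "Ycl Y" and p: "p \<in> P" "p \<notin> Y"
  and q: "q \<in> A" "q' \<in> A" "adj L p q" "adj L p q'" shows "q = q'"
proof (rule ccontr)
  assume ne: "q \<noteq> q'"
  have PP: "q \<in> P" "q' \<in> P" using q qA quad_P by blast+
  show False
  proof (cases "adj L q q'")
    case True
    have "p \<in> Y" by (rule YclT[OF Y True _ _ p(1) q(3) q(4)]) (use q AY in blast)+
    thus False using p by blast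
  next
    case False
    have "d q q' = 2" by (rule dist2[OF ne False adj_sym[OF q(3)] q(4)])
    hence "p \<in> A" by (rule quad_conv[OF qA q(1) q(2) _ adj_sym[OF q(3)] q(4)])
    thus False using p AY by blast
  qed
qed

lemma H1: assumes bA: "big_quad P L A" and bB: "big_quad P L B" and dj: "A \<inter> B = {}"
  and u: "u \<in> A" and v: "v \<in> B" and duv: "d u v = 2" and a: "a \<in> B" "adj L u a"
  shows "adj L a v"
proof (rule ccontr)
  assume na: "\<not> adj L a v"
  have qA: "quad P L A" and qB: "quad P L B" using bA bB big_quad by auto
  have uP: "u \<in> P" using u qA quad_P by blast
  have vP: "v \<in> P" using v qB quad_P by blast
  have aP: "a \<in> P" using a qB quad_P by blast
  have av: "a \<noteq> v" using duv dist_1[OF a(2)] by auto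
  have dav: "d a v = 2" by (rule d2[OF aP vP av na quad_diam[OF qB a(1) v]])
  obtain n where n: "n \<in> L" "u \<in> n" "a \<in> n" using adj_line[OF a(2)] by blast
  have ua: "u \<noteq> a" using adj_neq[OF a(2)] .
  obtain g where g: "g \<in> n" "g \<noteq> u" "g \<noteq> a" using third_ex[OF n ua] by blast
  have dvu: "d v u = 2" using duv dist_sym[OF uP vP] by simp
  have dva: "d v a = 2" using dav dist_sym[OF aP vP] by simp
  have "d v g \<le> 1" by (rule LP2[OF vP n(1) n(2) n(3) g(1) ua g(2)[symmetric] g(3)[symmetric] dvu dva])
  moreover have gv: "g \<noteq> v"
  proof
    assume "g = v"
    hence "adj L u v" using line_adj[OF n(1) n(2) g(1)] g(2) by simp
    thus False using dist_1 duv by simp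
  qed
  moreover have gP: "g \<in> P" using g n line_sub by blast
  ultimately have vg: "adj L v g" using le1[OF vP gP] by blast
  have ag: "adj L a g" using line_adj[OF n(1) n(3) g(1)] g(3) by simp
  have gB: "g \<in> B" by (rule quad_conv[OF qB a(1) v dav ag adj_sym[OF vg]])
  have ug: "adj L u g" using line_adj[OF n(1) n(2) g(1)] g(2) by simp
  have "a = g" by (rule G[OF bB bA _ u a(1) gB a(2) ug]) (use dj in blast)
  thus False using g by simp
qed

lemma Fa: assumes Y: "Ycl Y" and qA: "quad P L A" and AY: "A \<subseteq> Y"
  and l: "l \<in> L" "l \<inter> Y = {}" and v: "v1 \<in> l" "v2 \<in> l" "v1 \<noteq> v2"
  and a: "a1 \<in> A" "a2 \<in> A" "adj L v1 a1" "adj L v2 a2"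
  shows "a1 \<noteq> a2 \<and> adj L a1 a2"
proof -
  have vP: "v1 \<in> P" "v2 \<in> P" using v l line_sub by blast+
  have vY: "v1 \<notin> Y" "v2 \<notin> Y" using v l by blast+
  have aP: "a1 \<in> P" "a2 \<in> P" using a qA quad_P by blast+
  have aY: "a1 \<in> Y" "a2 \<in> Y" using a AY by blast+
  have vv: "adj L v1 v2" by (rule line_adj[OF l(1) v])
  have ne: "a1 \<noteq> a2"
  proof
    assume e: "a1 = a2"
    have "a1 \<in> l" by (rule LP1[OF aP(1) l(1) v(1) v(2) v(3) adj_sym[OF a(3)]]) (use e a(4) adj_sym in blast)
    thus False using l aY by blast
  qed
  have na1v2: "\<not> adj L a1 v2"
  proof
    assume "adj L a1 v2"
    hence "a1 = a2" using UY[OF qA AY Y vP(2) vY(2) a(1) a(2) adj_sym a(4)] by blast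
    thus False using ne by simp
  qed
  have "adj L a1 a2"
  proof (rule ccontr)
    assume na: "\<not> adj L a1 a2"
    have d12: "d a1 a2 = 2" by (rule d2[OF aP ne na quad_diam[OF qA a(1) a(2)]])
    have a1v2: "a1 \<noteq> v2" using aY vY by blast
    have d1v: "d a1 v2 = 2" by (rule dist2[OF a1v2 na1v2 adj_sym[OF a(3)] vv])
    obtain n where n: "n \<in> L" "v2 \<in> n" "a2 \<in> n" using adj_line[OF a(4)] by blast
    have va: "v2 \<noteq> a2" using adj_neq[OF a(4)] .
    obtain s where s: "s \<in> n" "s \<noteq> v2" "s \<noteq> a2" using third_ex[OF n va] by blast
    have "d a1 s \<le> 1" by (rule LP2[OF aP(1) n(1) n(2) n(3) s(1) va s(2)[symmetric] s(3)[symmetric] d1v d12])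
    moreover have "a1 \<noteq> s"
    proof
      assume "a1 = s"
      hence "adj L a1 v2" using line_adj[OF n(1) s(1) n(2)] s(2) by simp
      thus False using na1v2 by simp
    qed
    moreover have sP: "s \<in> P" using s n line_sub by blast
    ultimately have a1s: "adj L a1 s" using le1[OF aP(1) sP] by blast
    have sa2: "adj L s a2" using line_adj[OF n(1) s(1) n(3)] s(3) by simp
    have sA: "s \<in> A" by (rule quad_conv[OF qA a(1) a(2) d12 a1s sa2])
    have v2s: "adj L v2 s" using line_adj[OF n(1) n(2) s(1)] s(2) by simp
    have "s = a2" by (rule UY[OF qA AY Y vP(2) vY(2) sA a(2) v2s a(4)])
    thus False using s by simp
  qed
  thus ?thesis using ne by simp
qed


lemma d12: assumes Y: "Ycl Y" and x: "x \<in> P" "x \<notin> Y" and a: "x1 \<in> Y" "x2 \<in> Y" "x1 \<noteq> x2"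
  "adj L x x1" "adj L x x2" shows "d x1 x2 = 2"
proof -
  have "\<not> adj L x1 x2"
  proof
    assume "adj L x1 x2"
    hence "x \<in> Y" by (rule YclT[OF Y _ a(1) a(2) x(1) a(4) a(5)])
    thus False using x by simp
  qed
  thus ?thesis by (rule dist2[OF a(3) _ adj_sym[OF a(4)] a(5)])
qed

lemma core:
  assumes dn: "dense P L" and bA: "big_quad P L A" and bB: "big_quad P L B" and dj: "A \<inter> B = {}"
  and AY: "A \<subseteq> Y" and BY: "B \<subseteq> Y" and Y: "Ycl Y"
  and l: "l \<in> L" "l \<inter> Y = {}" and pts: "x \<in> l" "y \<in> l" "w \<in> l" "x \<noteq> y" "x \<noteq> w" "y \<noteq> w"
  and p1: "x1 \<in> A" "y1 \<in> A" "w1 \<in> A" "adj L x x1" "adj L y y1" "adj L w w1"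
  and p2: "x2 \<in> B" "y2 \<in> B" "w2 \<in> B" "adj L x x2" "adj L y y2" "adj L w w2"
  and c: "adj L y1 x2" and a: "a \<in> B" "adj L x1 a"
  shows "a = w2"
proof -
  have qA: "quad P L A" and qB: "quad P L B" using bA bB big_quad by auto
  have lP: "x \<in> P" "y \<in> P" "w \<in> P" using pts l line_sub by blast+
  have lY: "x \<notin> Y" "y \<notin> Y" "w \<notin> Y" using pts l by blast+
  have P1: "x1 \<in> P" "y1 \<in> P" "w1 \<in> P" using p1 qA quad_P by blast+
  have P2: "x2 \<in> P" "y2 \<in> P" "w2 \<in> P" using p2 qB quad_P by blast+
  have Y1: "x1 \<in> Y" "y1 \<in> Y" "w1 \<in> Y" using p1 AY by blast+
  have Y2: "x2 \<in> Y" "y2 \<in> Y" "w2 \<in> Y" using p2 BY by blast+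
  have aP: "a \<in> P" using a qB quad_P by blast
  have aY: "a \<in> Y" using a BY by blast
  have xy: "adj L x y" by (rule line_adj[OF l(1) pts(1) pts(2) pts(4)])
  have f1: "x1 \<noteq> y1 \<and> adj L x1 y1" by (rule Fa[OF Y qA AY l pts(1) pts(2) pts(4) p1(1) p1(2) p1(4) p1(5)])
  have f2: "x1 \<noteq> w1 \<and> adj L x1 w1" by (rule Fa[OF Y qA AY l pts(1) pts(3) pts(5) p1(1) p1(3) p1(4) p1(6)])
  have f3: "y1 \<noteq> w1 \<and> adj L y1 w1" by (rule Fa[OF Y qA AY l pts(2) pts(3) pts(6) p1(2) p1(3) p1(5) p1(6)])
  have g1: "x2 \<noteq> y2 \<and> adj L x2 y2" by (rule Fa[OF Y qB BY l pts(1) pts(2) pts(4) p2(1) p2(2) p2(4) p2(5)])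
  have g2: "x2 \<noteq> w2 \<and> adj L x2 w2" by (rule Fa[OF Y qB BY l pts(1) pts(3) pts(5) p2(1) p2(3) p2(4) p2(6)])
  have g3: "y2 \<noteq> w2 \<and> adj L y2 w2" by (rule Fa[OF Y qB BY l pts(2) pts(3) pts(6) p2(2) p2(3) p2(5) p2(6)])
  have uy1: "q = y1" if "q \<in> A" "adj L y q" for q by (rule UY[OF qA AY Y lP(2) lY(2) that(1) p1(2) that(2) p1(5)])
  have ux1: "q = x1" if "q \<in> A" "adj L x q" for q by (rule UY[OF qA AY Y lP(1) lY(1) that(1) p1(1) that(2) p1(4)])
  have uy2: "q = y2" if "q \<in> B" "adj L y q" for q by (rule UY[OF qB BY Y lP(2) lY(2) that(1) p2(2) that(2) p2(5)])
  have djBA: "B \<inter> A = {}" using dj by blast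
  have uA: "q = q'" if "p \<in> B" "q \<in> A" "q' \<in> A" "adj L p q" "adj L p q'" for p q q'
    by (rule G[OF bA bB dj that])
  have uB: "q = q'" if "p \<in> A" "q \<in> B" "q' \<in> B" "adj L p q" "adj L p q'" for p q q'
    by (rule G[OF bB bA djBA that])
  have yx2: "y \<noteq> x2" using lY Y2 by blast
  have nyx2: "\<not> adj L y x2" using uy2[OF p2(1)] g1 by blast
  have dyx2: "d y x2 = 2" by (rule dist2[OF yx2 nyx2 adj_sym[OF xy] p2(4)])
  obtain R where R: "quad P L R" "y \<in> R" "x2 \<in> R" using dn lP(2) P2(1) dyx2 unfolding dense_def by blast
  have xR: "x \<in> R" by (rule quad_conv[OF R(1) R(2) R(3) dyx2 adj_sym[OF xy] p2(4)])
  have y1R: "y1 \<in> R" by (rule quad_conv[OF R(1) R(2) R(3) dyx2 p1(5) c])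
  have xy1: "x \<noteq> y1" using lY Y1 by blast
  have nxy1: "\<not> adj L x y1" using ux1[OF p1(2)] f1 by blast
  have dxy1: "d x y1 = 2" by (rule dist2[OF xy1 nxy1 xy p1(5)])
  have x1R: "x1 \<in> R" by (rule quad_conv[OF R(1) xR y1R dxy1 p1(4)]) (use f1 in blast)
  have x12: "x1 \<noteq> x2" using p1 p2 dj by blast
  have dx12: "d x1 x2 = 2" by (rule d12[OF Y lP(1) lY(1) Y1(1) Y2(1) x12 p1(4) p2(4)])
  have ax2: "adj L a x2" by (rule H1[OF bA bB dj p1(1) p2(1) dx12 a])
  have aR: "a \<in> R" by (rule quad_conv[OF R(1) x1R R(3) dx12 a(2) ax2])
  obtain m2 where m2: "m2 \<in> L" "x2 \<in> m2" "y2 \<in> m2" using adj_line g1 by blast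
  have w2m: "w2 \<in> m2" by (rule LP1[OF P2(3) m2 _ adj_sym[OF conjunct2[OF g2]] adj_sym[OF conjunct2[OF g3]]]) (use g1 in blast)
  have am: "a \<in> m2"
  proof (rule ccontr)
    assume anm: "a \<notin> m2"
    have ay2: "a \<noteq> y2" using anm m2 by blast
    have nay2: "\<not> adj L a y2"
    proof
      assume h: "adj L a y2"
      have "a \<in> m2" by (rule LP1[OF aP m2(1) m2(2) m2(3) conjunct1[OF g1] ax2 h])
      thus False using anm by simp
    qed
    have day2: "d a y2 = 2" by (rule d2[OF aP P2(2) ay2 nay2 quad_diam[OF qB a(1) p2(2)]])
    have ay: "a \<noteq> y" using aY lY by blast
    have nay: "\<not> adj L a y" using uy2[OF a(1)] ay2 adj_sym by blast
    have day: "d a y = 2" by (rule d2[OF aP lP(2) ay nay quad_diam[OF R(1) aR R(2)]])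
    obtain n where n: "n \<in> L" "y \<in> n" "y2 \<in> n" using adj_line[OF p2(5)] by blast
    have yy2: "y \<noteq> y2" using adj_neq[OF p2(5)] .
    obtain s where s: "s \<in> n" "s \<noteq> y" "s \<noteq> y2" using third_ex[OF n yy2] by blast
    have "d a s \<le> 1" by (rule LP2[OF aP n(1) n(2) n(3) s(1) yy2 s(2)[symmetric] s(3)[symmetric] day day2])
    moreover have "a \<noteq> s"
    proof
      assume "a = s"
      hence "adj L a y" using line_adj[OF n(1) s(1) n(2)] s(2) by simp
      thus False using nay by simp
    qed
    moreover have sP: "s \<in> P" using s n line_sub by blast
    ultimately have as: "adj L a s" using le1[OF aP sP] by blast
    have sy2: "adj L s y2" using line_adj[OF n(1) s(1) n(3)] s(3) by simp
    have sB: "s \<in> B" by (rule quad_conv[OF qB a(1) p2(2) day2 as sy2])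
    have ys: "adj L y s" using line_adj[OF n(1) n(2) s(1)] s(2) by simp
    have "s = y2" by (rule uy2[OF sB ys])
    thus False using s by simp
  qed
  have anx2: "a \<noteq> x2" using adj_neq[OF ax2] .
  have any2: "a \<noteq> y2"
  proof
    assume ay2: "a = y2"
    have x1y2: "adj L x1 y2" using a(2) ay2 by simp
    obtain b where b: "b \<in> B" "adj L w1 b" using big_ex[OF bB P1(3)] p1(3) dj by blast
    have nw1x2: "\<not> adj L w1 x2"
    proof
      assume "adj L w1 x2"
      hence "w1 = y1" using uA[OF p2(1) p1(3) p1(2) adj_sym adj_sym[OF c]] by blast
      thus False using f3 by simp
    qed
    have w1x2: "w1 \<noteq> x2" using p1 p2 dj by blast
    have dw1x2: "d w1 x2 = 2" by (rule dist2[OF w1x2 nw1x2 adj_sym c]) (use f3 in blast)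
    have bx2: "adj L b x2" by (rule H1[OF bA bB dj p1(3) p2(1) dw1x2 b])
    have nw1y2: "\<not> adj L w1 y2"
    proof
      assume "adj L w1 y2"
      hence "w1 = x1" using uA[OF p2(2) p1(3) p1(1) adj_sym adj_sym[OF x1y2]] by blast
      thus False using f2 by simp
    qed
    have w1y2: "w1 \<noteq> y2" using p1 p2 dj by blast
    have dw1y2: "d w1 y2 = 2" by (rule dist2[OF w1y2 nw1y2 adj_sym x1y2]) (use f2 in blast)
    have by2: "adj L b y2" by (rule H1[OF bA bB dj p1(3) p2(2) dw1y2 b])
    have bP: "b \<in> P" using b qB quad_P by blast
    have bm: "b \<in> m2" by (rule LP1[OF bP m2(1) m2(2) m2(3) conjunct1[OF g1] bx2 by2])
    have bx: "b \<noteq> x2" using b(2) nw1x2 by blast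
    have bnuy: "b \<noteq> y2" using b(2) nw1y2 by blast
    have "b = x2 \<or> b = y2 \<or> b = w2" by (rule card3[OF m2 w2m _ _ _ bm]) (use g1 g2 g3 in blast)+
    hence bw: "b = w2" using bx bnuy by blast
    have w12: "w1 \<noteq> w2" using p1 p2 dj by blast
    have "w \<in> Y" by (rule YclT[OF Y _ Y1(3) Y2(3) lP(3) p1(6) p2(6)]) (use b bw in blast)
    thus False using lY by simp
  qed
  have "a = x2 \<or> a = y2 \<or> a = w2" by (rule card3[OF m2 w2m _ _ _ am]) (use g1 g2 g3 in blast)+
  thus ?thesis using anx2 any2 by blast
qed


lemma proj_eq: assumes "Q \<subseteq> P" "q \<in> Q" "adj L p q" "\<And>q'. q' \<in> Q \<Longrightarrow> adj L p q' \<Longrightarrow> q' = q" "p \<in> P"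
  shows "proj_pt L Q p = q"
  unfolding proj_pt_def
proof (rule the_equality)
  show "q \<in> Q \<and> d p q = 1" using assms(2) dist_1[OF assms(3)] by simp
  fix r assume r: "r \<in> Q \<and> d p r = 1"
  have "r \<in> P" using r assms(1) by blast
  hence "adj L p r" using dist_1D[OF assms(5)] r by blast
  thus "r = q" using assms(4) r by blast
qed

end

theorem proposition2p4:
  fixes P :: "'a set" and L :: "'a set set" and Q1 Q2 :: "'a set" and l :: "'a set" and x y :: 'a
  assumes "slim_pls P L" and "near_hexagon P L" and "dense P L"
    and "big_quad P L Q1" and "big_quad P L Q2" and "Q1 \<inter> Q2 = {}"
    and "l \<in> L" and "l \<inter> generated_subspace P L (Q1 \<union> Q2) = {}"
    and "x \<in> l" and "y \<in> l" and "x \<noteq> y"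
  shows "((line_through L (proj_pt L Q1 x) (proj_pt L Q1 y)
            = line_through L (proj_pt L Q1 x) (proj_pt L Q1 (proj_pt L Q2 x)))
         \<longleftrightarrow> (line_through L (proj_pt L Q2 x) (proj_pt L Q2 y)
            = line_through L (proj_pt L Q2 x) (proj_pt L Q2 (proj_pt L Q1 x))))
       \<and> (line_through L (proj_pt L Q1 x) (proj_pt L Q1 y)
            = line_through L (proj_pt L Q1 x) (proj_pt L Q1 (proj_pt L Q2 x)) \<longrightarrow>
         (proj_pt L Q1 y, proj_pt L Q2 y)
            = (proj_pt L Q1 (proj_pt L Q2 x), third L (proj_pt L Q2 x) (proj_pt L Q2 (proj_pt L Q1 x)))
       \<or> (proj_pt L Q1 y, proj_pt L Q2 y)
            = (third L (proj_pt L Q1 x) (proj_pt L Q1 (proj_pt L Q2 x)), proj_pt L Q2 (proj_pt L Q1 x)))"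
proof -
  interpret nh P L using assms(1,2) by (rule nh.intro)
  note bA = assms(4) and bB = assms(5) and dj = assms(6) and dn = assms(3)
  have djBA: "Q2 \<inter> Q1 = {}" using dj by blast
  have qA: "quad P L Q1" and qB: "quad P L Q2" using bA bB big_quad by auto
  define Y where "Y = generated_subspace P L (Q1 \<union> Q2)"
  have Y: "Ycl Y" unfolding Ycl_def
  proof (intro ballI allI impI)
    fix m u v assume m: "m \<in> L" and h: "u \<noteq> v \<and> u \<in> m \<and> v \<in> m \<and> u \<in> Y \<and> v \<in> Y"
    show "m \<subseteq> Y" unfolding Y_def generated_subspace_def
    proof (rule Inter_greatest)
      fix X assume X: "X \<in> {X. subspace P L X \<and> Q1 \<union> Q2 \<subseteq> X}"
      have "u \<in> X" "v \<in> X" using h X unfolding Y_def generated_subspace_def by blast+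
      thus "m \<subseteq> X" using X m h unfolding subspace_def by blast
    qed
  qed
  have AY: "Q1 \<subseteq> Y" and BY: "Q2 \<subseteq> Y" unfolding Y_def generated_subspace_def by blast+
  have l: "l \<in> L" "l \<inter> Y = {}" using assms(7,8) Y_def by simp_all
  obtain w where w: "w \<in> l" "w \<noteq> x" "w \<noteq> y" using third_ex[OF l(1) assms(9,10,11)] by blast
  have pts: "x \<in> l" "y \<in> l" "w \<in> l" "x \<noteq> y" "x \<noteq> w" "y \<noteq> w" using assms(9,10,11) w by auto
  have lP: "x \<in> P" "y \<in> P" "w \<in> P" using pts l line_sub by blast+
  have lY: "x \<notin> Y" "y \<notin> Y" "w \<notin> Y" using pts l by blast+
  have lQ: "x \<notin> Q1" "y \<notin> Q1" "w \<notin> Q1" "x \<notin> Q2" "y \<notin> Q2" "w \<notin> Q2" using lY AY BY by blast+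
  obtain x1 where x1: "x1 \<in> Q1" "adj L x x1" using big_ex[OF bA lP(1) lQ(1)] by blast
  obtain y1 where y1: "y1 \<in> Q1" "adj L y y1" using big_ex[OF bA lP(2) lQ(2)] by blast
  obtain w1 where w1: "w1 \<in> Q1" "adj L w w1" using big_ex[OF bA lP(3) lQ(3)] by blast
  obtain x2 where x2: "x2 \<in> Q2" "adj L x x2" using big_ex[OF bB lP(1) lQ(4)] by blast
  obtain y2 where y2: "y2 \<in> Q2" "adj L y y2" using big_ex[OF bB lP(2) lQ(5)] by blast
  obtain w2 where w2: "w2 \<in> Q2" "adj L w w2" using big_ex[OF bB lP(3) lQ(6)] by blast
  have P1: "x1 \<in> P" "y1 \<in> P" "w1 \<in> P" using x1 y1 w1 qA quad_P by blast+
  have P2: "x2 \<in> P" "y2 \<in> P" "w2 \<in> P" using x2 y2 w2 qB quad_P by blast+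
  have px1: "proj_pt L Q1 x = x1"
    by (rule proj_eq[OF quad_P[OF qA] x1 _ lP(1)]) (rule UY[OF qA AY Y lP(1) lY(1) _ x1(1) _ x1(2)])
  have py1: "proj_pt L Q1 y = y1"
    by (rule proj_eq[OF quad_P[OF qA] y1 _ lP(2)]) (rule UY[OF qA AY Y lP(2) lY(2) _ y1(1) _ y1(2)])
  have px2: "proj_pt L Q2 x = x2"
    by (rule proj_eq[OF quad_P[OF qB] x2 _ lP(1)]) (rule UY[OF qB BY Y lP(1) lY(1) _ x2(1) _ x2(2)])
  have py2: "proj_pt L Q2 y = y2"
    by (rule proj_eq[OF quad_P[OF qB] y2 _ lP(2)]) (rule UY[OF qB BY Y lP(2) lY(2) _ y2(1) _ y2(2)])
  have x2nA: "x2 \<notin> Q1" using x2 dj by blast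
  have x1nB: "x1 \<notin> Q2" using x1 dj by blast
  obtain c where c: "c \<in> Q1" "adj L x2 c" using big_ex[OF bA P2(1) x2nA] by blast
  obtain a where a: "a \<in> Q2" "adj L x1 a" using big_ex[OF bB P1(1) x1nB] by blast
  have pc: "proj_pt L Q1 x2 = c"
    by (rule proj_eq[OF quad_P[OF qA] c _ P2(1)]) (rule G[OF bA bB dj x2(1) _ c(1) _ c(2)])
  have pa: "proj_pt L Q2 x1 = a"
    by (rule proj_eq[OF quad_P[OF qB] a _ P1(1)]) (rule G[OF bB bA djBA x1(1) _ a(1) _ a(2)])
  have Y1: "x1 \<in> Y" "y1 \<in> Y" "w1 \<in> Y" using x1 y1 w1 AY by blast+
  have Y2: "x2 \<in> Y" "y2 \<in> Y" "w2 \<in> Y" using x2 y2 w2 BY by blast+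
  have x12: "x1 \<noteq> x2" using x1 x2 dj by blast
  have dx12: "d x1 x2 = 2" by (rule d12[OF Y lP(1) lY(1) Y1(1) Y2(1) x12 x1(2) x2(2)])
  have dx21: "d x2 x1 = 2" by (rule d12[OF Y lP(1) lY(1) Y2(1) Y1(1) x12[symmetric] x2(2) x1(2)])
  have cx1: "adj L c x1" by (rule H1[OF bB bA djBA x2(1) x1(1) dx21 c])
  have ax2: "adj L a x2" by (rule H1[OF bA bB dj x1(1) x2(1) dx12 a])
  have f1: "x1 \<noteq> y1 \<and> adj L x1 y1" by (rule Fa[OF Y qA AY l pts(1) pts(2) pts(4) x1(1) y1(1) x1(2) y1(2)])
  have f2: "x1 \<noteq> w1 \<and> adj L x1 w1" by (rule Fa[OF Y qA AY l pts(1) pts(3) pts(5) x1(1) w1(1) x1(2) w1(2)])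
  have f3: "y1 \<noteq> w1 \<and> adj L y1 w1" by (rule Fa[OF Y qA AY l pts(2) pts(3) pts(6) y1(1) w1(1) y1(2) w1(2)])
  have g1: "x2 \<noteq> y2 \<and> adj L x2 y2" by (rule Fa[OF Y qB BY l pts(1) pts(2) pts(4) x2(1) y2(1) x2(2) y2(2)])
  have g2: "x2 \<noteq> w2 \<and> adj L x2 w2" by (rule Fa[OF Y qB BY l pts(1) pts(3) pts(5) x2(1) w2(1) x2(2) w2(2)])
  have g3: "y2 \<noteq> w2 \<and> adj L y2 w2" by (rule Fa[OF Y qB BY l pts(2) pts(3) pts(6) y2(1) w2(1) y2(2) w2(2)])
  obtain m1 where m1: "m1 \<in> L" "x1 \<in> m1" "y1 \<in> m1" using adj_line f1 by blast
  obtain m2 where m2: "m2 \<in> L" "x2 \<in> m2" "y2 \<in> m2" using adj_line g1 by blast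
  have w1m: "w1 \<in> m1" by (rule LP1[OF P1(3) m1 _ adj_sym[OF conjunct2[OF f2]] adj_sym[OF conjunct2[OF f3]]]) (use f1 in blast)
  have w2m: "w2 \<in> m2" by (rule LP1[OF P2(3) m2 _ adj_sym[OF conjunct2[OF g2]] adj_sym[OF conjunct2[OF g3]]]) (use g1 in blast)
  have lt1: "line_through L x1 y1 = m1" by (rule line_through_eq[OF m1(1) _ m1(2) m1(3)]) (use f1 in blast)
  have lt2: "line_through L x2 y2 = m2" by (rule line_through_eq[OF m2(1) _ m2(2) m2(3)]) (use g1 in blast)
  obtain n1 where n1: "n1 \<in> L" "x1 \<in> n1" "c \<in> n1" using adj_line[OF adj_sym[OF cx1]] by blast
  obtain n2 where n2: "n2 \<in> L" "x2 \<in> n2" "a \<in> n2" using adj_line[OF adj_sym[OF ax2]] by blast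
  have x1c: "x1 \<noteq> c" using adj_neq[OF cx1] by simp
  have x2a: "x2 \<noteq> a" using adj_neq[OF ax2] by simp
  have ln1: "line_through L x1 c = n1" by (rule line_through_eq[OF n1(1) x1c n1(2) n1(3)])
  have ln2: "line_through L x2 a = n2" by (rule line_through_eq[OF n2(1) x2a n2(2) n2(3)])
  have E1: "(m1 = n1) \<longleftrightarrow> (c = y1 \<or> c = w1)"
  proof
    assume "m1 = n1"
    hence zm: "c \<in> m1" using n1 by simp
    have "c = x1 \<or> c = y1 \<or> c = w1" by (rule card3[OF m1 w1m _ _ _ zm]) (use f1 f2 f3 in blast)+
    thus "c = y1 \<or> c = w1" using x1c by blast
  next
    assume "c = y1 \<or> c = w1"
    hence "c \<in> m1" using m1 w1m by blast
    thus "m1 = n1" using line_uniq[OF m1(1) n1(1) x1c m1(2) _ n1(2) n1(3)] by blast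
  qed
  have E2: "(m2 = n2) \<longleftrightarrow> (a = y2 \<or> a = w2)"
  proof
    assume "m2 = n2"
    hence zm: "a \<in> m2" using n2 by simp
    have "a = x2 \<or> a = y2 \<or> a = w2" by (rule card3[OF m2 w2m _ _ _ zm]) (use g1 g2 g3 in blast)+
    thus "a = y2 \<or> a = w2" using x2a by blast
  next
    assume "a = y2 \<or> a = w2"
    hence "a \<in> m2" using m2 w2m by blast
    thus "m2 = n2" using line_uniq[OF m2(1) n2(1) x2a m2(2) _ n2(2) n2(3)] by blast
  qed
  have pts': "x \<in> l" "w \<in> l" "y \<in> l" "x \<noteq> w" "x \<noteq> y" "w \<noteq> y" using pts by auto
  have C1: "a = w2" if "c = y1"
    by (rule core[OF dn bA bB dj AY BY Y l pts x1(1) y1(1) w1(1) x1(2) y1(2) w1(2) x2(1) y2(1) w2(1) x2(2) y2(2) w2(2) _ a])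
       (use that c adj_sym in blast)
  have C2: "a = y2" if "c = w1"
    by (rule core[OF dn bA bB dj AY BY Y l pts' x1(1) w1(1) y1(1) x1(2) w1(2) y1(2) x2(1) w2(1) y2(1) x2(2) w2(2) y2(2) _ a])
       (use that c adj_sym in blast)
  have C3: "c = w1" if "a = y2"
    by (rule core[OF dn bB bA djBA BY AY Y l pts x2(1) y2(1) w2(1) x2(2) y2(2) w2(2) x1(1) y1(1) w1(1) x1(2) y1(2) w1(2) _ c])
       (use that a adj_sym in blast)
  have C4: "c = y1" if "a = w2"
    by (rule core[OF dn bB bA djBA BY AY Y l pts' x2(1) w2(1) y2(1) x2(2) w2(2) y2(2) x1(1) w1(1) y1(1) x1(2) w1(2) y1(2) _ c])
       (use that a adj_sym in blast)
  have t2: "third L x2 w2 = y2" by (rule third_eq[OF m2(1) m2(2) w2m m2(3)]) (use g1 g2 g3 in blast)+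
  have t1: "third L x1 w1 = y1" by (rule third_eq[OF m1(1) m1(2) w1m m1(3)]) (use f1 f2 f3 in blast)+
  have main1: "(line_through L x1 y1 = line_through L x1 c) \<longleftrightarrow> (line_through L x2 y2 = line_through L x2 a)"
    unfolding lt1 lt2 ln1 ln2 E1 E2 using C1 C2 C3 C4 by blast
  have main2: "line_through L x1 y1 = line_through L x1 c \<longrightarrow>
         (y1, y2) = (c, third L x2 a) \<or> (y1, y2) = (third L x1 c, a)"
    unfolding lt1 ln1 E1 using C1 C2 t1 t2 by auto
  show ?thesis unfolding px1 py1 px2 py2 pc pa using main1 main2 by blast
qed

end
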